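(* Let $(G,f)$ be any weighted graph. Then $$\max\{\Delta_f(G)+1,\ \Gamma_f(G)\}=\max\{\Delta_f(G)+1,\ W_f(G)\}.$$
   Context: Graphs are finite and undirected; multiple edges are allowed, loops are not. A weighted graph $(G,f)$ is a graph $G$ together with a function $f\colon V(G)\to\mathbb{Z}_{>0}$. For $U\subseteq V(G)$ write $f(U)=\sum_{v\in U}f(v)$, and $f(H)=f(V(H))$ for a subgraph $H$. $E[U]$ denotes the set of edges with both ends in $U$. $\partial U$ denotes the set of edges with exactly one end in $U$. $d_G(v)$ is the degree of $v$, counting multiple edges with multiplicity. The fractional maximum $f$-degree is $\Delta_f^*(G)=\max_{v\in V(G)} d_G(v)/f(v)$. The maximum $f$-degree is $\Delta_f(G)=\lceil \Delta_f^*(G)\rceil$. The fractional $f$-density is $W_f^*(G)=\max\{ |E(H)|/\lfloor \tfrac12 f(H)\rfloor : H\subseteq G \text{ a subgraph},\ |V(H)|\ge 2\}$, with $W_f^*(G)=0$ if $|V(G)|<2$. The $f$-density is $W_f(G)=\lceil W_f^*(G)\rceil$. Define $$\Gamma_f^*(G)=\max\left\{\frac{|E[U]|+|F|}{\lfloor \tfrac12 (f(U)+|F|)\rfloor} : U\subseteq V(G),\ F\subseteq \partial U,\ f(U)+|F|\ge 2\right\},$$ with $\Gamma_f^*(G)=0$ if $G$ has no edge. Set $\Gamma_f(G)=\lceil \Gamma_f^*(G)\rceil$. *)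

theory Defs
  imports Complex_Main "HOL-Library.Multiset"
begin

text \<open>A multigraph without loops: finite vertex set V and a multiset E of edges,
  each edge being a 2-element subset of V (multiplicities model parallel edges).\<close>

definition weighted_graph :: "'a set \<Rightarrow> 'a set multiset \<Rightarrow> ('a \<Rightarrow> nat) \<Rightarrow> bool" where
  "weighted_graph V E f \<longleftrightarrow> finite V \<and> (\<forall>e\<in>#E. e \<subseteq> V \<and> card e = 2) \<and> (\<forall>v\<in>V. f v > 0)"

definition fsum :: "('a \<Rightarrow> nat) \<Rightarrow> 'a set \<Rightarrow> nat" where
  "fsum f U = (\<Sum>v\<in>U. f v)"

definition deg :: "'a set multiset \<Rightarrow> 'a \<Rightarrow> nat" where
  "deg E v = size (filter_mset (\<lambda>e. v \<in> e) E)"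

definition edges_in :: "'a set multiset \<Rightarrow> 'a set \<Rightarrow> 'a set multiset" where
  "edges_in E U = filter_mset (\<lambda>e. e \<subseteq> U) E"

definition boundary :: "'a set multiset \<Rightarrow> 'a set \<Rightarrow> 'a set multiset" where
  "boundary E U = filter_mset (\<lambda>e. card (e \<inter> U) = 1) E"

definition frac_max_fdeg :: "'a set \<Rightarrow> 'a set multiset \<Rightarrow> ('a \<Rightarrow> nat) \<Rightarrow> real" where
  "frac_max_fdeg V E f = (if V = {} then 0 else Max ((\<lambda>v. real (deg E v) / real (f v)) ` V))"

definition max_fdeg :: "'a set \<Rightarrow> 'a set multiset \<Rightarrow> ('a \<Rightarrow> nat) \<Rightarrow> int" where
  "max_fdeg V E f = \<lceil>frac_max_fdeg V E f\<rceil>"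

definition frac_fdensity :: "'a set \<Rightarrow> 'a set multiset \<Rightarrow> ('a \<Rightarrow> nat) \<Rightarrow> real" where
  "frac_fdensity V E f = (if card V < 2 then 0 else
     Max {real (size F) / real (fsum f U div 2) | U F.
            U \<subseteq> V \<and> card U \<ge> 2 \<and> F \<subseteq># E \<and> (\<forall>e\<in>#F. e \<subseteq> U)})"

definition fdensity :: "'a set \<Rightarrow> 'a set multiset \<Rightarrow> ('a \<Rightarrow> nat) \<Rightarrow> int" where
  "fdensity V E f = \<lceil>frac_fdensity V E f\<rceil>"

definition frac_Gamma :: "'a set \<Rightarrow> 'a set multiset \<Rightarrow> ('a \<Rightarrow> nat) \<Rightarrow> real" where
  "frac_Gamma V E f = (if E = {#} then 0 else
     Max {real (size (edges_in E U) + size F) / real ((fsum f U + size F) div 2) | U F.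
            U \<subseteq> V \<and> F \<subseteq># boundary E U \<and> fsum f U + size F \<ge> 2})"

definition Gamma :: "'a set \<Rightarrow> 'a set multiset \<Rightarrow> ('a \<Rightarrow> nat) \<Rightarrow> int" where
  "Gamma V E f = \<lceil>frac_Gamma V E f\<rceil>"

end

theory Submission
  imports Defs
begin

lemma fin_sub: "finite {F. F \<subseteq># (E::'b multiset)}"
proof -
  have "{F. F \<subseteq># E} \<subseteq> (\<Union>n\<in>{..size E}. multisets_of_size (set_mset E) n)"
    by (auto simp: multisets_of_size_def dest: set_mset_mono size_mset_mono)
  then show ?thesis by (rule finite_subset) auto
qed

lemma deg_sum: "finite U \<Longrightarrow> (\<Sum>v\<in>U. deg E v) = (\<Sum>e\<in>#E. card (e \<inter> U))"
proof (induction E)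
  case empty
  then show ?case by (simp add: deg_def)
next
  case (add e E)
  have d: "deg (add_mset e E) v = deg E v + (if v \<in> e then 1 else 0)" for v
    by (simp add: deg_def)
  have c: "(\<Sum>v\<in>U. (if v \<in> e then 1 else 0::nat)) = card (e \<inter> U)"
    using add.prems by (simp add: sum.If_cases Int_commute)
  show ?case using add by (simp add: d sum.distrib c)
qed

lemma edges_count:
  "\<forall>e\<in>#E. card e = 2 \<Longrightarrow> 2 * size (edges_in E U) + size (boundary E U) \<le> (\<Sum>e\<in>#E. card (e \<inter> U))"
proof (induction E)
  case empty
  then show ?case by (simp add: edges_in_def boundary_def)
next
  case (add e E)
  have ce: "card e = 2" using add.prems by simp
  have "2 * (if e \<subseteq> U then 1 else 0) + (if card (e \<inter> U) = 1 then 1 else 0) \<le> card (e \<inter> U)"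
  proof (cases "e \<subseteq> U")
    case True then have "e \<inter> U = e" by auto
    then show ?thesis using ce by simp
  qed simp
  then show ?case using add
    by (cases "e \<subseteq> U"; cases "card (e \<inter> U) = 1") (simp_all add: edges_in_def boundary_def)
qed

lemma fsum_ge_card: "finite U \<Longrightarrow> \<forall>v\<in>U. f v > 0 \<Longrightarrow> card U \<le> fsum f U"
proof -
  assume "finite U" "\<forall>v\<in>U. f v > 0"
  then have "(\<Sum>v\<in>U. (1::nat)) \<le> (\<Sum>v\<in>U. f v)"
    by (intro sum_mono) auto
  then show ?thesis by (simp add: fsum_def)
qed

lemma arith_key:
  fixes m b a D k q :: int
  assumes "2*(m+b) \<le> D*a + b" "k \<ge> D+1" "D \<ge> 0" "a \<ge> 1" "b \<ge> 1" "2*q \<ge> a+b-1"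
  shows "m + b \<le> k*q"
proof -
  have k0: "k \<ge> 0" using assms by linarith
  have 1: "k*(a+b-1) \<ge> (D+1)*(a+b-1)" using assms by (intro mult_right_mono) auto
  have 2: "D*(b-1) \<ge> 0" using assms by simp
  have 3: "(D+1)*(a+b-1) = D*a + D*(b-1) + a+b-1" by (simp add: algebra_simps)
  have 4: "k*(2*q) \<ge> k*(a+b-1)" using assms k0 by (intro mult_left_mono) auto
  show ?thesis using assms 1 2 3 4 by (simp add: algebra_simps)
qed

theorem lemma1:
  fixes V :: "'a set" and E :: "'a set multiset" and f :: "'a \<Rightarrow> nat"
  assumes "weighted_graph V E f"
  shows "max (max_fdeg V E f + 1) (Gamma V E f) = max (max_fdeg V E f + 1) (fdensity V E f)"
proof -
  have finV: "finite V" and Esub: "\<And>e. e \<in># E \<Longrightarrow> e \<subseteq> V" and Ecard: "\<And>e. e \<in># E \<Longrightarrow> card e = 2"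
    and fpos: "\<And>v. v \<in> V \<Longrightarrow> f v > 0"
    using assms by (auto simp: weighted_graph_def)
  define D where "D = max_fdeg V E f"
  define Wd where "Wd = fdensity V E f"
  define k where "k = max (D+1) Wd"
  define SW where "SW = {real (size F) / real (fsum f U div 2) | U F.
            U \<subseteq> V \<and> card U \<ge> 2 \<and> F \<subseteq># E \<and> (\<forall>e\<in>#F. e \<subseteq> U)}"
  define SG where "SG = {real (size (edges_in E U) + size F) / real ((fsum f U + size F) div 2) | U F.
            U \<subseteq> V \<and> F \<subseteq># boundary E U \<and> fsum f U + size F \<ge> 2}"
  have finSW: "finite SW"
  proof -
    have "SW \<subseteq> (\<lambda>(U,F). real (size F) / real (fsum f U div 2)) ` (Pow V \<times> {F. F \<subseteq># E})"
    proof
      fix x assume "x \<in> SW"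
      then obtain U F where "U \<subseteq> V" "F \<subseteq># E" "x = real (size F) / real (fsum f U div 2)"
        unfolding SW_def by blast
      then show "x \<in> (\<lambda>(U,F). real (size F) / real (fsum f U div 2)) ` (Pow V \<times> {F. F \<subseteq># E})"
        by (intro rev_image_eqI[of "(U,F)"]) auto
    qed
    moreover have "finite (Pow V \<times> {F. F \<subseteq># E})" using finV fin_sub by blast
    ultimately show ?thesis using finite_subset by blast
  qed
  have finSG: "finite SG"
  proof -
    have "SG \<subseteq> (\<lambda>(U,F). real (size (edges_in E U) + size F) / real ((fsum f U + size F) div 2))
                 ` (Pow V \<times> {F. F \<subseteq># E})"
    proof
      fix x assume "x \<in> SG"
      then obtain U F where "U \<subseteq> V" "F \<subseteq># boundary E U" "x = real (size (edges_in E U) + size F) / real ((fsum f U + size F) div 2)"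
        unfolding SG_def by blast
      moreover have "boundary E U \<subseteq># E" unfolding boundary_def by (rule multiset_filter_subset)
      ultimately show "x \<in> (\<lambda>(U,F). real (size (edges_in E U) + size F) / real ((fsum f U + size F) div 2)) ` (Pow V \<times> {F. F \<subseteq># E})"
        by (intro rev_image_eqI[of "(U,F)"]) (auto intro: subset_mset.order_trans)
    qed
    moreover have "finite (Pow V \<times> {F. F \<subseteq># E})" using finV fin_sub by blast
    ultimately show ?thesis using finite_subset by blast
  qed
  have Wstar: "card V \<ge> 2 \<Longrightarrow> frac_fdensity V E f = Max SW"
    unfolding frac_fdensity_def SW_def by simp
  have Gstar: "E \<noteq> {#} \<Longrightarrow> frac_Gamma V E f = Max SG"
    unfolding frac_Gamma_def SG_def by simp
  have Dstar_ge: "real (deg E v) / real (f v) \<le> frac_max_fdeg V E f" if "v \<in> V" for v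
    using that finV unfolding frac_max_fdeg_def by (auto intro!: Max_ge)
  have D0: "D \<ge> 0"
  proof (cases "V = {}")
    case True then show ?thesis by (simp add: D_def max_fdeg_def frac_max_fdeg_def)
  next
    case False
    then obtain v where "v \<in> V" by auto
    have "0 \<le> real (deg E v) / real (f v)" by simp
    also have "\<dots> \<le> frac_max_fdeg V E f" using Dstar_ge[OF \<open>v \<in> V\<close>] .
    finally show ?thesis by (simp add: D_def max_fdeg_def)
  qed
  have degb: "real (deg E v) \<le> real_of_int D * real (f v)" if "v \<in> V" for v
  proof -
    have fp: "real (f v) > 0" using fpos[OF that] by simp
    have "real (deg E v) / real (f v) \<le> real_of_int D"
      using Dstar_ge[OF that] unfolding D_def max_fdeg_def
      by (meson le_of_int_ceiling order_trans)
    then show ?thesis using fp by (simp add: divide_le_eq)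
  qed
  have Wd_ge: "x \<le> real_of_int Wd" if "x \<in> SW" for x
  proof -
    from that obtain U F where U: "U \<subseteq> V" "card U \<ge> 2" "F \<subseteq># E"
      unfolding SW_def by auto
    have "card U \<le> card V" by (rule card_mono[OF finV U(1)])
    then have "card V \<ge> 2" using U(2) by linarith
    then have "x \<le> frac_fdensity V E f" using Wstar Max_ge[OF finSW that] by simp
    then show ?thesis unfolding Wd_def fdensity_def by (meson le_of_int_ceiling order_trans)
  qed
  have elem: "x \<le> real_of_int k" if "x \<in> SG" for x
  proof -
    from that obtain U F where U: "U \<subseteq> V" and F: "F \<subseteq># boundary E U" and ab: "fsum f U + size F \<ge> 2"
      and x: "x = real (size (edges_in E U) + size F) / real ((fsum f U + size F) div 2)"
      unfolding SG_def by auto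
    define m where "m = size (edges_in E U)"
    define a where "a = fsum f U"
    define b where "b = size F"
    have finU: "finite U" using finV U finite_subset by auto
    have q1: "(a + b) div 2 \<ge> 1" using ab a_def b_def by simp
    have x': "x = real (m + b) / real ((a+b) div 2)" using x m_def a_def b_def by simp
    have "2*m + size (boundary E U) \<le> (\<Sum>v\<in>U. deg E v)"
      using edges_count[of E U] Ecard deg_sum[OF finU, of E] m_def by auto
    moreover have "b \<le> size (boundary E U)" using F b_def by (simp add: size_mset_mono)
    ultimately have c1: "2*m + b \<le> (\<Sum>v\<in>U. deg E v)" by linarith
    have "real (\<Sum>v\<in>U. deg E v) = (\<Sum>v\<in>U. real (deg E v))" by simp
    also have "\<dots> \<le> (\<Sum>v\<in>U. real_of_int D * real (f v))"
      using U by (intro sum_mono degb) auto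
    also have "\<dots> = real_of_int D * real a" by (simp add: a_def fsum_def sum_distrib_left)
    finally have c2: "real (2*m + b) \<le> real_of_int D * real a" using c1
      by (meson of_nat_le_iff order_trans)
    have main: "real (m + b) \<le> real_of_int k * real ((a+b) div 2)"
    proof (cases "b = 0")
      case b0: True
      show ?thesis
      proof (cases "card U \<ge> 2")
        case True
        have "real m / real (a div 2) \<in> SW"
          unfolding SW_def m_def a_def edges_in_def using U True by (intro CollectI exI[of _ U] exI[of _ "filter_mset (\<lambda>e. e \<subseteq> U) E"]) (auto simp: multiset_filter_subset)
        then have "real m / real (a div 2) \<le> real_of_int Wd" by (rule Wd_ge)
        moreover have "real (a div 2) > 0" using q1 b0 by simp
        ultimately have "real m \<le> real_of_int Wd * real (a div 2)" by (simp add: divide_le_eq)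
        moreover have "real_of_int Wd * real (a div 2) \<le> real_of_int k * real (a div 2)"
          by (intro mult_right_mono) (auto simp: k_def)
        ultimately show ?thesis using b0 by simp
      next
        case False
        have "edges_in E U = {#}"
        proof (rule ccontr)
          assume "edges_in E U \<noteq> {#}"
          then obtain e where "e \<in># E" "e \<subseteq> U" unfolding edges_in_def by fastforce
          then have "card e \<le> card U" using finU card_mono by blast
          then show False using Ecard[OF \<open>e \<in># E\<close>] False by simp
        qed
        then have "m = 0" using m_def by simp
        moreover have "k \<ge> 0" using D0 by (simp add: k_def)
        ultimately show ?thesis using b0 by simp
      qed
    next
      case False
      then have "boundary E U \<noteq> {#}" using F b_def by auto
      then obtain e where "e \<in># E" "card (e \<inter> U) = 1" unfolding boundary_def by fastforce
      then have "U \<noteq> {}" by auto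
      then obtain v where "v \<in> U" by auto
      have "f v \<le> a" unfolding a_def fsum_def using finU \<open>v \<in> U\<close>
        by (simp add: member_le_sum)
      then have a1: "a \<ge> 1" using fpos[of v] U \<open>v \<in> U\<close> by fastforce
      have "int m + int b \<le> k * int ((a+b) div 2)"
      proof (rule arith_key[where D=D and a="int a"])
        show "2 * (int m + int b) \<le> D * int a + int b"
        proof -
          have "real_of_int (2 * (int m + int b)) = real (2*m + b) + real b" by simp
          also have "\<dots> \<le> real_of_int D * real a + real b" using c2 by simp
          also have "\<dots> = real_of_int (D * int a + int b)" by simp
          finally show ?thesis by linarith
        qed
        show "D + 1 \<le> k" by (simp add: k_def)
        show "0 \<le> D" by (rule D0)
        show "1 \<le> int a" using a1 by simp
        show "1 \<le> int b" using False by simp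
        show "int a + int b - 1 \<le> 2 * int ((a + b) div 2)" by linarith
      qed
      then have "real_of_int (int m + int b) \<le> real_of_int (k * int ((a+b) div 2))"
        by (simp only: of_int_le_iff)
      then show ?thesis by simp
    qed
    have "real ((a+b) div 2) > 0" using q1 by simp
    then show ?thesis using main x' by (simp add: divide_le_eq)
  qed
  have G_le: "Gamma V E f \<le> k"
  proof -
    have "frac_Gamma V E f \<le> real_of_int k"
    proof (cases "E = {#}")
      case True then show ?thesis using D0 by (simp add: frac_Gamma_def k_def)
    next
      case False
      then obtain e where e: "e \<in># E" by fastforce
      have "card e \<le> fsum f e"
        using Esub[OF e] fpos finV Ecard[OF e] by (intro fsum_ge_card) (auto simp: card_ge_0_finite)
      then have "real (size (edges_in E e) + size ({#}::'a set multiset)) / real ((fsum f e + size ({#}::'a set multiset)) div 2) \<in> SG"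
        unfolding SG_def using Esub[OF e] Ecard[OF e] by (intro CollectI exI[of _ e] exI[of _ "{#}"]) auto
      then have "SG \<noteq> {}" by auto
      then show ?thesis using Gstar[OF False] finSG elem by simp
    qed
    then show ?thesis unfolding Gamma_def by (simp add: ceiling_le_iff)
  qed
  have W_le: "fdensity V E f \<le> Gamma V E f"
  proof -
    have "frac_fdensity V E f \<le> frac_Gamma V E f"
    proof (cases "E = {#}")
      case Eemp: True
      show ?thesis
      proof (cases "card V \<ge> 2")
        case True
        have "SW \<noteq> {}" unfolding SW_def using True by (intro ex_in_conv[THEN iffD1]) (auto intro!: exI[of _ V] exI[of _ "{#}"])
        moreover have "\<forall>x\<in>SW. x \<le> 0" unfolding SW_def using Eemp by auto
        ultimately show ?thesis using Wstar[OF True] finSW Eemp by (simp add: frac_Gamma_def)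
      next
        case False then show ?thesis using Eemp by (simp add: frac_fdensity_def frac_Gamma_def)
      qed
    next
      case Ene: False
      then obtain e where e: "e \<in># E" by fastforce
      have "card e \<le> fsum f e"
        using Esub[OF e] fpos finV Ecard[OF e] by (intro fsum_ge_card) (auto simp: card_ge_0_finite)
      then have ein: "real (size (edges_in E e) + size ({#}::'a set multiset)) / real ((fsum f e + size ({#}::'a set multiset)) div 2) \<in> SG"
        unfolding SG_def using Esub[OF e] Ecard[OF e] by (intro CollectI exI[of _ e] exI[of _ "{#}"]) auto
      have SGne: "SG \<noteq> {}" using ein by auto
      have G0: "frac_Gamma V E f \<ge> 0"
        using Gstar[OF Ene] Max_ge[OF finSG ein] by (smt (verit) divide_nonneg_nonneg of_nat_0_le_iff)
      show ?thesis
      proof (cases "card V \<ge> 2")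
        case False then show ?thesis using G0 by (simp add: frac_fdensity_def)
      next
        case True
        have "SW \<noteq> {}" unfolding SW_def using True by (intro ex_in_conv[THEN iffD1]) (auto intro!: exI[of _ V] exI[of _ "{#}"])
        moreover have "\<forall>x\<in>SW. \<exists>y\<in>SG. x \<le> y"
        proof
          fix x assume "x \<in> SW"
          then obtain U F where U: "U \<subseteq> V" "card U \<ge> 2" "F \<subseteq># E" "\<forall>e\<in>#F. e \<subseteq> U"
            and x: "x = real (size F) / real (fsum f U div 2)" unfolding SW_def by auto
          have finU: "finite U" using finite_subset[OF U(1) finV] .
          have "card U \<le> fsum f U" using finU fpos U by (intro fsum_ge_card) auto
          then have y: "real (size (edges_in E U) + size ({#}::'a set multiset)) / real ((fsum f U + size ({#}::'a set multiset)) div 2) \<in> SG"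
            unfolding SG_def using U by (intro CollectI exI[of _ U] exI[of _ "{#}"]) auto
          have "F \<subseteq># edges_in E U"
          proof -
            have "filter_mset (\<lambda>e. e \<subseteq> U) F = F" using U(4) by (simp add: filter_mset_eq_conv)
            then show ?thesis unfolding edges_in_def using multiset_filter_mono[OF U(3)] by metis
          qed
          then have "size F \<le> size (edges_in E U)" by (rule size_mset_mono)
          then have "x \<le> real (size (edges_in E U) + size ({#}::'a set multiset)) / real ((fsum f U + size ({#}::'a set multiset)) div 2)"
            unfolding x by (simp add: divide_right_mono)
          then show "\<exists>y\<in>SG. x \<le> y" using y by blast
        qed
        ultimately have "Max SW \<le> Max SG" using finSW finSG SGne
          by (meson Max_ge Max_in order_trans)
        then show ?thesis using Wstar[OF True] Gstar[OF Ene] by simp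
      qed
    qed
    then show ?thesis unfolding fdensity_def Gamma_def by (rule ceiling_mono)
  qed
  show ?thesis using G_le W_le unfolding D_def[symmetric] Wd_def[symmetric] k_def by linarith
qed

end
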